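(* Let $k\ge 2$, let $\boldsymbol\mu\in\mathbb{R}^k$ and let $\boldsymbol\Sigma$ be a symmetric positive definite $k\times k$ matrix. Let $n\ge2$, let $\alpha_1,\dots,\alpha_n>0$ be pairwise distinct, $\beta_1,\dots,\beta_n>0$ with $\sum_i\beta_i=1$, and $\phi_1,\dots,\phi_n>0$. Set $\boldsymbol\beta=(\beta_1,\dots,\beta_n)'$, $\mathbf{A}_0=\mathrm{diag}(\alpha_1,\dots,\alpha_n)$, $\boldsymbol\Phi=\mathrm{diag}(\phi_1,\dots,\phi_n)$, $\mathbf{B}=\mathrm{diag}(\beta_1,\dots,\beta_n)$, $\bar\phi=\sum_i\beta_i\phi_i$, $$\mathbf{A}=(\mathbf{A}_0+\boldsymbol\Phi)\mathbf{B}+(\bar\phi\mathbf{I}_n-2\boldsymbol\Phi)\boldsymbol\beta\boldsymbol\beta',\qquad \mathbf{A}_\phi=(\mathbf{A}+\mathbf{A}')/2,$$ and $\mathbf{Q}=\boldsymbol\Sigma^{-1}-\dfrac{\boldsymbol\Sigma^{-1}\mathbf{1}\mathbf{1}'\boldsymbol\Sigma^{-1}}{\mathbf{1}'\boldsymbol\Sigma^{-1}\mathbf{1}}$, where $\mathbf{1}\in\mathbb{R}^k$ and $\mathbf{1}_n\in\mathbb{R}^n$ are vectors of ones. Consider the problem of maximizing, over $k\times n$ real matrices $\mathbf{W}$, $$EU^*(\mathbf{W})=\boldsymbol\beta'\mathbf{W}'\boldsymbol\mu-\frac12\operatorname{tr}(\mathbf{A}\mathbf{W}'\boldsymbol\Sigma\mathbf{W})\quad\text{subject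 to}\quad \mathbf{W}'\mathbf{1}=\mathbf{1}_n.$$ Then $\mathbf{A}_\phi$ is symmetric and positive definite, and the optimal solution is $$\mathcal{W}^*=\frac{\boldsymbol\Sigma^{-1}\mathbf{1}}{\mathbf{1}'\boldsymbol\Sigma^{-1}\mathbf{1}}\mathbf{1}_n'+\mathbf{Q}\boldsymbol\mu\,(\boldsymbol\beta'\mathbf{A}_\phi^{-1}).$$
   Context: Here $\boldsymbol\mu$ and $\boldsymbol\Sigma$ are the mean vector and covariance matrix of the returns of $k$ risky assets; column $i$ of $\mathbf{W}$ is the portfolio weight vector of investor $i$ (risk aversion $\alpha_i$, wealth share $\beta_i$, mimicking coefficient $\phi_i$), and $EU^*$ is the aggregate (wealth-weighted) mean-variance objective of the investors, each penalizing the $\boldsymbol\Sigma$-weighted squared deviation of his portfolio from the aggregate portfolio $\mathbf{W}\boldsymbol\beta$. *)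

theory Defs
  imports "HOL-Analysis.Analysis"
begin

definition sym_pos_def_mat :: "real^'n^'n \<Rightarrow> bool" where
  "sym_pos_def_mat M \<longleftrightarrow> transpose M = M \<and> (\<forall>x. x \<noteq> 0 \<longrightarrow> x \<bullet> (M *v x) > 0)"

definition diag_mat :: "real^'n \<Rightarrow> real^'n^'n" where
  "diag_mat v = (\<chi> i j. if i = j then v $ i else 0)"

definition outer :: "real^'m \<Rightarrow> real^'n \<Rightarrow> real^'n^'m" where
  "outer a b = (\<chi> i j. a $ i * b $ j)"

definition A_mat :: "real^'n \<Rightarrow> real^'n \<Rightarrow> real^'n \<Rightarrow> real^'n^'n" where
  "A_mat alpha beta phi =
     (diag_mat alpha + diag_mat phi) ** diag_mat beta
     + ((beta \<bullet> phi) *\<^sub>R mat 1 - 2 *\<^sub>R diag_mat phi) ** outer beta beta"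

definition A_phi :: "real^'n \<Rightarrow> real^'n \<Rightarrow> real^'n \<Rightarrow> real^'n^'n" where
  "A_phi alpha beta phi = (1/2) *\<^sub>R (A_mat alpha beta phi + transpose (A_mat alpha beta phi))"

definition Q_mat :: "real^'k^'k \<Rightarrow> real^'k^'k" where
  "Q_mat S = matrix_inv S
     - (1 / (vec 1 \<bullet> (matrix_inv S *v vec 1))) *\<^sub>R
         (matrix_inv S ** outer (vec 1) (vec 1) ** matrix_inv S)"

definition EU :: "real^'k \<Rightarrow> real^'k^'k \<Rightarrow> real^'n^'n \<Rightarrow> real^'n \<Rightarrow> real^'n^'k \<Rightarrow> real" where
  "EU mu S A beta W = beta \<bullet> (transpose W *v mu) - (1/2) * trace (A ** transpose W ** S ** W)"

definition feasible :: "real^'n^'k \<Rightarrow> bool" where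
  "feasible W \<longleftrightarrow> transpose W *v vec 1 = vec 1"

definition W_star :: "real^'k \<Rightarrow> real^'k^'k \<Rightarrow> real^'n \<Rightarrow> real^'n \<Rightarrow> real^'n \<Rightarrow> real^'n^'k" where
  "W_star mu S alpha beta phi =
     outer ((1 / (vec 1 \<bullet> (matrix_inv S *v vec 1))) *\<^sub>R (matrix_inv S *v vec 1)) (vec 1)
     + outer (Q_mat S *v mu) (beta v* matrix_inv (A_phi alpha beta phi))"

end

theory Submission
  imports Defs
begin


lemma outer_transpose: "transpose (outer a b) = outer b a"
  by (simp add: outer_def transpose_def vec_eq_iff)
lemma mat_outer: "(M::real^'n^'m) ** outer a b = outer (M *v a) b"
  by (simp add: outer_def matrix_matrix_mult_def matrix_vector_mult_def vec_eq_iff sum_distrib_left mult_ac)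
lemma outer_mat: "outer a b ** (M::real^'n^'m) = outer a (b v* M)"
  by (simp add: outer_def matrix_matrix_mult_def vector_matrix_mult_def vec_eq_iff sum_distrib_left mult_ac)
lemma outer_mulv: "outer a b *v x = (b \<bullet> x) *\<^sub>R a"
  by (simp add: outer_def matrix_vector_mult_def inner_vec_def vec_eq_iff sum_distrib_left mult_ac)
lemma vmul_outer: "x v* outer a b = (x \<bullet> a) *\<^sub>R b"
  by (simp add: outer_def vector_matrix_mult_def inner_vec_def vec_eq_iff sum_distrib_left mult_ac)
lemma outer_add1: "outer (a + a') b = outer a b + outer a' b"
  by (simp add: outer_def vec_eq_iff algebra_simps)
lemma outer_add2: "outer a (b + b') = outer a b + outer a b'"
  by (simp add: outer_def vec_eq_iff algebra_simps)
lemma outer_diff1: "outer (a - a') b = outer a b - outer a' b"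
  by (simp add: outer_def vec_eq_iff algebra_simps)
lemma outer_diff2: "outer a (b - b') = outer a b - outer a b'"
  by (simp add: outer_def vec_eq_iff algebra_simps)
lemma outer_scale1: "outer (c *\<^sub>R a) b = c *\<^sub>R outer a b"
  by (simp add: outer_def vec_eq_iff algebra_simps)
lemma outer_scale2: "outer a (c *\<^sub>R b) = c *\<^sub>R outer a b"
  by (simp add: outer_def vec_eq_iff algebra_simps)
lemma trace_outer: "trace (outer a b ** (D::real^'n^'m)) = b \<bullet> (D *v a)"
  by (simp add: trace_def outer_def matrix_matrix_mult_def matrix_vector_mult_def inner_vec_def sum_distrib_left mult_ac)
     (rule sum.swap)
lemma trace_transpose: "trace (transpose (M::real^'n^'n)) = trace M"
  by (simp add: trace_def transpose_def)
lemma diag_mulv: "diag_mat v *v x = (\<chi> i. v$i * x$i)"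
  by (simp add: diag_mat_def matrix_vector_mult_def vec_eq_iff if_distrib[where f="\<lambda>a. a * _"] cong: if_cong)

lemma inv_props:
  fixes M :: "real^'n^'n"
  assumes "invertible M"
  shows "M ** matrix_inv M = mat 1" "matrix_inv M ** M = mat 1"
proof -
  have "\<exists>A'. M ** A' = mat 1 \<and> A' ** M = mat 1" using assms invertible_def by blast
  then have "M ** matrix_inv M = mat 1 \<and> matrix_inv M ** M = mat 1"
    unfolding matrix_inv_def by (rule someI_ex)
  then show "M ** matrix_inv M = mat 1" "matrix_inv M ** M = mat 1" by auto
qed

lemma pd_invertible:
  fixes M :: "real^'n^'n"
  assumes "sym_pos_def_mat M" shows "invertible M"
proof -
  have "\<forall>x. M *v x = 0 \<longrightarrow> x = 0"
    using assms unfolding sym_pos_def_mat_def by (metis inner_zero_right less_irrefl)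
  then show ?thesis using matrix_left_invertible_ker invertible_left_inverse by blast
qed

lemma inv_sym:
  fixes M :: "real^'n^'n"
  assumes "invertible M" "transpose M = M"
  shows "transpose (matrix_inv M) = matrix_inv M"
proof -
  have "transpose (matrix_inv M) ** M = mat 1"
    using inv_props(1)[OF assms(1)] by (metis assms(2) matrix_transpose_mul transpose_mat)
  then have "transpose (matrix_inv M) ** M ** matrix_inv M = matrix_inv M" by simp
  then show ?thesis using inv_props(1)[OF assms(1)] by (metis matrix_mul_assoc matrix_mul_rid)
qed

lemma inv_pd:
  fixes M :: "real^'n^'n"
  assumes "sym_pos_def_mat M"
  shows "sym_pos_def_mat (matrix_inv M)"
proof -
  have inv: "invertible M" using pd_invertible assms by blast
  have sym: "transpose M = M" using assms sym_pos_def_mat_def by blast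
  show ?thesis unfolding sym_pos_def_mat_def
  proof (intro conjI allI impI)
    show "transpose (matrix_inv M) = matrix_inv M" using inv_sym inv sym by blast
    fix x :: "real^'n" assume "x \<noteq> 0"
    define y where "y = matrix_inv M *v x"
    have My: "M *v y = x" unfolding y_def using inv_props(1)[OF inv] by (simp add: matrix_vector_mul_assoc)
    then have "y \<noteq> 0" using \<open>x \<noteq> 0\<close> by auto
    then have "y \<bullet> (M *v y) > 0" using assms sym_pos_def_mat_def by blast
    then show "x \<bullet> (matrix_inv M *v x) > 0" using My y_def by (simp add: inner_commute)
  qed
qed




lemma scale_mulv: "((c::real) *\<^sub>R (M::real^'n^'m)) *v v = c *\<^sub>R (M *v v)"
  by (simp add: matrix_vector_mult_def vec_eq_iff sum_distrib_left mult_ac)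

lemma A_mulv:
  "A_mat alpha beta phi *v x =
   (\<chi> i. (alpha$i + phi$i) * beta$i * x$i + ((beta \<bullet> phi) - 2 * phi$i) * (beta \<bullet> x) * beta$i)"
  unfolding A_mat_def
  by (simp add: matrix_vector_mult_add_rdistrib matrix_vector_mul_assoc[symmetric] diag_mulv outer_mulv
      matrix_vector_mult_diff_rdistrib vec_eq_iff scale_mulv algebra_simps inner_commute)




lemma A_quad:
  "x \<bullet> (A_mat alpha beta phi *v x) =
   (\<Sum>i\<in>UNIV. alpha$i * beta$i * (x$i)^2) + (\<Sum>i\<in>UNIV. phi$i * beta$i * (x$i - beta \<bullet> x)^2)"
proof -
  define s where "s = beta \<bullet> x"
  define b where "b = beta \<bullet> phi"
  have s: "s = (\<Sum>i\<in>UNIV. beta$i * x$i)" unfolding s_def inner_vec_def by simp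
  have b: "b = (\<Sum>i\<in>UNIV. beta$i * phi$i)" unfolding b_def inner_vec_def by simp
  have "x \<bullet> (A_mat alpha beta phi *v x) =
     (\<Sum>i\<in>UNIV. x$i * ((alpha$i + phi$i) * beta$i * x$i + (b - 2 * phi$i) * s * beta$i))"
    unfolding A_mulv inner_vec_def s_def b_def by simp
  also have "\<dots> = (\<Sum>i\<in>UNIV. alpha$i * beta$i * (x$i)^2) + (\<Sum>i\<in>UNIV. phi$i * beta$i * (x$i)^2)
      + b * s * (\<Sum>i\<in>UNIV. beta$i * x$i) - 2 * s * (\<Sum>i\<in>UNIV. phi$i * beta$i * x$i)"
    by (simp add: algebra_simps sum.distrib sum_subtractf sum_distrib_left power2_eq_square)
  also have "\<dots> = (\<Sum>i\<in>UNIV. alpha$i * beta$i * (x$i)^2) + ((\<Sum>i\<in>UNIV. phi$i * beta$i * (x$i)^2)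
      - 2 * s * (\<Sum>i\<in>UNIV. phi$i * beta$i * x$i) + s^2 * (\<Sum>i\<in>UNIV. beta$i * phi$i))"
    by (simp add: s[symmetric] b[symmetric] power2_eq_square algebra_simps)
  also have "(\<Sum>i\<in>UNIV. phi$i * beta$i * (x$i)^2)
      - 2 * s * (\<Sum>i\<in>UNIV. phi$i * beta$i * x$i) + s^2 * (\<Sum>i\<in>UNIV. beta$i * phi$i)
      = (\<Sum>i\<in>UNIV. phi$i * beta$i * (x$i - s)^2)"
    by (simp add: algebra_simps sum.distrib sum_subtractf sum_distrib_left power2_eq_square)
  finally show ?thesis unfolding s_def .
qed

lemma Aphi_quad: "x \<bullet> (A_phi alpha beta phi *v x) = x \<bullet> (A_mat alpha beta phi *v x)"
  unfolding A_phi_def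
  by (simp add: scale_mulv matrix_vector_mult_add_rdistrib inner_add_right dot_lmul_matrix[symmetric]
      inner_commute[of "x v* _"])

lemma Aphi_pd:
  assumes "\<forall>i. alpha $ i > 0" "\<forall>i. beta $ i > 0" "\<forall>i. phi $ i > 0"
  shows "sym_pos_def_mat (A_phi alpha beta phi)"
  unfolding sym_pos_def_mat_def
proof (intro conjI allI impI)
  show "transpose (A_phi alpha beta phi) = A_phi alpha beta phi"
    unfolding A_phi_def by (simp add: transpose_scalar transpose_def vec_eq_iff)
  fix x :: "real^'a" assume "x \<noteq> 0"
  then obtain j where j: "x$j \<noteq> 0" by (metis vec_eq_iff zero_index)
  have "0 < (\<Sum>i\<in>UNIV. alpha$i * beta$i * (x$i)^2)"
  proof (rule sum_pos2[where i=j])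
    show "0 < alpha$j * beta$j * (x$j)^2" using assms j by simp
    show "\<And>i. i \<in> UNIV \<Longrightarrow> 0 \<le> alpha$i * beta$i * (x$i)^2"
      using assms by (metis mult_nonneg_nonneg less_imp_le zero_le_power2)
  qed auto
  moreover have "0 \<le> (\<Sum>i\<in>UNIV. phi$i * beta$i * (x$i - beta \<bullet> x)^2)"
    by (rule sum_nonneg) (use assms in \<open>metis mult_nonneg_nonneg less_imp_le zero_le_power2\<close>)
  ultimately show "x \<bullet> (A_phi alpha beta phi *v x) > 0" unfolding Aphi_quad A_quad by linarith
qed




lemma matrix_add_rdistrib': "((B + C) ** (A::real^'p^'n)) = (B ** A) + (C ** A)"
  by (vector matrix_matrix_mult_def sum.distrib[symmetric] field_simps)

lemma quad_sym_swap:
  fixes M :: "real^'n^'n"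
  assumes "transpose M = M"
  shows "y \<bullet> (M *v x) = x \<bullet> (M *v y)"
proof -
  have "y \<bullet> (M *v x) = (y v* M) \<bullet> x" by (simp add: dot_lmul_matrix)
  also have "y v* M = M *v y" by (metis assms vector_transpose_matrix)
  finally show ?thesis by (simp add: inner_commute)
qed

lemma quad_expand:
  fixes M :: "real^'n^'n"
  assumes "transpose M = M"
  shows "(x + t *\<^sub>R y) \<bullet> (M *v (x + t *\<^sub>R y)) =
    x \<bullet> (M *v x) + 2 * t * (x \<bullet> (M *v y)) + t^2 * (y \<bullet> (M *v y))"
  using quad_sym_swap[OF assms, of y x]
  by (simp add: matrix_vector_mult_add_rdistrib matrix_vector_mult_scaleR inner_add_left inner_add_right
      algebra_simps power2_eq_square)

lemma psd_zero_diag: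
  fixes M :: "real^'n^'n"
  assumes sym: "transpose M = M" and psd: "\<forall>x. x \<bullet> (M *v x) \<ge> 0" and z: "M$p$p = 0"
  shows "M$q$p = 0"
proof (rule ccontr)
  assume ne: "M$q$p \<noteq> 0"
  define x where "x = (axis q 1 :: real^'n)"
  define y where "y = (axis p 1 :: real^'n)"
  have yy: "y \<bullet> (M *v y) = 0" unfolding y_def using z
    by (simp add: matrix_vector_mult_basis inner_axis' column_def)
  have xy: "x \<bullet> (M *v y) = M$q$p" unfolding x_def y_def
    by (simp add: matrix_vector_mult_basis inner_axis' column_def)
  define t where "t = - (\<bar>x \<bullet> (M *v x)\<bar> + 1) / (2 * M$q$p)"
  have "0 \<le> (x + t *\<^sub>R y) \<bullet> (M *v (x + t *\<^sub>R y))" using psd by blast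
  also have "\<dots> = x \<bullet> (M *v x) + 2 * t * M$q$p" using quad_expand[OF sym] yy xy by simp
  also have "2 * t * M$q$p = - (\<bar>x \<bullet> (M *v x)\<bar> + 1)" unfolding t_def using ne by simp
  finally show False by linarith
qed

lemma psd_decomp_aux:
  fixes M :: "real^'n^'n"
  shows "card {i. M$i$i \<noteq> 0} = m \<Longrightarrow> transpose M = M \<Longrightarrow> \<forall>x. x \<bullet> (M *v x) \<ge> 0 \<Longrightarrow>
     \<exists>ws. M = sum_list (map (\<lambda>w. outer w w) ws)"
proof (induction m arbitrary: M rule: less_induct)
  case (less m M)
  note sym = less.prems(2) and psd = less.prems(3)
  show ?case
  proof (cases "\<exists>p. M$p$p \<noteq> 0")
    case False
    then have "M = 0" using psd_zero_diag[OF sym psd] by (simp add: vec_eq_iff)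
    then show ?thesis by (intro exI[of _ "[]"]) simp
  next
    case True
    then obtain p where p0: "M$p$p \<noteq> 0" by blast
    have "0 \<le> axis p 1 \<bullet> (M *v axis p 1)" using psd by blast
    then have "M$p$p \<ge> 0" by (simp add: matrix_vector_mult_basis inner_axis' column_def)
    with p0 have pp: "M$p$p > 0" by simp
    define e where "e = (axis p 1 :: real^'n)"
    have Me: "M *v e = column p M" unfolding e_def by (simp add: matrix_vector_mult_basis)
    define w where "w = (1 / sqrt (M$p$p)) *\<^sub>R (M *v e)"
    define N where "N = M - outer w w"
    have symN: "transpose N = N" unfolding N_def using sym
      by (simp add: outer_def transpose_def vec_eq_iff mult.commute)
    have psdN: "\<forall>x. x \<bullet> (N *v x) \<ge> 0"
    proof
      fix x :: "real^'n"
      define c where "c = (x \<bullet> (M *v e)) / M$p$p"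
      have ee: "e \<bullet> (M *v e) = M$p$p" unfolding e_def
        by (simp add: matrix_vector_mult_basis inner_axis' column_def)
      have "0 \<le> (x + (-c) *\<^sub>R e) \<bullet> (M *v (x + (-c) *\<^sub>R e))" using psd by blast
      also have "\<dots> = x \<bullet> (M *v x) - 2 * c * (x \<bullet> (M *v e)) + c^2 * M$p$p"
        using quad_expand[OF sym, of x "-c" e] ee by (simp del: scaleR_minus_left)
      also have "\<dots> = x \<bullet> (M *v x) - (x \<bullet> (M *v e))^2 / M$p$p"
        unfolding c_def using pp by (simp add: field_simps power2_eq_square)
      also have "(x \<bullet> (M *v e))^2 / M$p$p = (w \<bullet> x)^2"
        unfolding w_def using pp by (simp add: power_divide inner_commute power_mult_distrib)
      also have "x \<bullet> (M *v x) - (w \<bullet> x)^2 = x \<bullet> (N *v x)"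
        unfolding N_def by (simp add: matrix_vector_mult_diff_rdistrib outer_mulv inner_diff_right
            power2_eq_square inner_commute)
      finally show "x \<bullet> (N *v x) \<ge> 0" .
    qed
    have wi: "w$i = M$i$p / sqrt (M$p$p)" for i unfolding w_def Me by (simp add: column_def)
    have sub: "{i. N$i$i \<noteq> 0} \<subseteq> {i. M$i$i \<noteq> 0} - {p}"
    proof
      fix i assume "i \<in> {i. N$i$i \<noteq> 0}"
      then have Ni: "N$i$i \<noteq> 0" by simp
      have Nii: "N$i$i = M$i$i - (M$i$p)^2 / M$p$p"
        unfolding N_def using pp by (simp add: outer_def wi power2_eq_square)
      have "i \<noteq> p"
      proof
        assume "i = p"
        then have "N$i$i = M$p$p - M$p$p * M$p$p / M$p$p" using Nii by (simp add: power2_eq_square)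
        then show False using Ni pp by simp
      qed
      moreover have "M$i$i \<noteq> 0"
      proof
        assume "M$i$i = 0"
        then have "M$p$i = 0" using psd_zero_diag[OF sym psd] by blast
        then have "M$i$p = 0" using sym by (metis transpose_def vec_lambda_beta)
        then show False using Ni Nii \<open>M$i$i = 0\<close> by simp
      qed
      ultimately show "i \<in> {i. M$i$i \<noteq> 0} - {p}" by simp
    qed
    have "card {i. N$i$i \<noteq> 0} \<le> card ({i. M$i$i \<noteq> 0} - {p})"
      by (rule card_mono[OF _ sub]) simp
    also have "\<dots> < card {i. M$i$i \<noteq> 0}"
      using p0 by (intro card_Diff1_less) auto
    finally have lt: "card {i. N$i$i \<noteq> 0} < m" using less.prems(1) by simp
    obtain ws where "N = sum_list (map (\<lambda>w. outer w w) ws)"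
      using less.IH[OF lt refl symN psdN] by blast
    then have "M = sum_list (map (\<lambda>w. outer w w) (w # ws))" unfolding N_def
      by (simp add: algebra_simps)
    then show ?thesis by blast
  qed
qed

lemma psd_decomp:
  fixes M :: "real^'n^'n"
  assumes "transpose M = M" "\<forall>x. x \<bullet> (M *v x) \<ge> 0"
  shows "\<exists>ws. M = sum_list (map (\<lambda>w. outer w w) ws)"
  using psd_decomp_aux assms by blast




lemma trace_outer1: "trace (outer a b) = b \<bullet> (a::real^'n)"
  using trace_outer[of a b "mat 1"] by simp

lemma term_eq: "(A::real^'n^'n) ** transpose (D::real^'n^'k) ** outer v v ** D
   = outer (A *v (v v* D)) (v v* D)"
  by (simp add: mat_outer outer_mat matrix_vector_mul_assoc[symmetric])

lemma trace_sumlist: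
  fixes A :: "real^'n^'n" and D :: "real^'n^'k"
  shows "trace (A ** transpose D ** sum_list (map (\<lambda>w. outer w w) vs) ** D)
     = sum_list (map (\<lambda>v. (v v* D) \<bullet> (A *v (v v* D))) vs)"
proof (induction vs)
  case Nil
  then show ?case by (simp add: trace_def)
next
  case (Cons v vs)
  have "A ** transpose D ** sum_list (map (\<lambda>w. outer w w) (v # vs)) ** D
     = A ** transpose D ** outer v v ** D + A ** transpose D ** sum_list (map (\<lambda>w. outer w w) vs) ** D"
    by (simp add: matrix_add_ldistrib matrix_add_rdistrib')
  then show ?case using Cons by (simp add: trace_add term_eq trace_outer1 inner_commute)
qed

lemma DS_sumlist:
  fixes D :: "real^'n^'k"
  shows "transpose D ** sum_list (map (\<lambda>w. outer w w) vs) = sum_list (map (\<lambda>v. outer (v v* D) v) vs)"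
  by (induction vs) (simp_all add: matrix_add_ldistrib mat_outer)

lemma trace_pos:
  fixes A :: "real^'n^'n" and S :: "real^'k^'k" and D :: "real^'n^'k"
  assumes S: "sym_pos_def_mat S" and A: "\<forall>x. x \<noteq> 0 \<longrightarrow> x \<bullet> (A *v x) > 0" and D: "D \<noteq> 0"
  shows "trace (A ** transpose D ** S ** D) > 0"
proof -
  have symS: "transpose S = S" using S unfolding sym_pos_def_mat_def by blast
  have psdS: "\<forall>x. x \<bullet> (S *v x) \<ge> 0"
  proof
    fix x :: "real^'k"
    show "x \<bullet> (S *v x) \<ge> 0"
    proof (cases "x = 0")
      case False then show ?thesis using S unfolding sym_pos_def_mat_def by (simp add: less_imp_le)
    qed simp
  qed
  obtain vs where vs: "S = sum_list (map (\<lambda>w. outer w w) vs)"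
    using psd_decomp[OF symS psdS] by blast
  have Aq: "x \<bullet> (A *v x) \<ge> 0" for x
  proof (cases "x = 0")
    case False then show ?thesis using A by (simp add: less_imp_le)
  qed simp
  have "\<exists>v\<in>set vs. v v* D \<noteq> 0"
  proof (rule ccontr)
    assume "\<not> (\<exists>v\<in>set vs. v v* D \<noteq> 0)"
    then have z: "\<forall>v\<in>set vs. v v* D = 0" by blast
    have "sum_list (map (\<lambda>v. outer (v v* D) v) vs) = 0"
      using z by (induction vs) (simp_all add: outer_def vec_eq_iff)
    then have "transpose D ** S = 0" unfolding vs DS_sumlist .
    then have "transpose D ** S ** matrix_inv S = 0" by simp
    moreover have "transpose D ** S ** matrix_inv S = transpose D"
      using inv_props(1)[OF pd_invertible[OF S]] by (simp add: matrix_mul_assoc[symmetric])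
    ultimately have "transpose D = 0" by simp
    then have "D = 0" by (simp add: transpose_def vec_eq_iff)
    with D show False by simp
  qed
  then obtain v where v: "v \<in> set vs" "v v* D \<noteq> 0" by blast
  have "0 < (v v* D) \<bullet> (A *v (v v* D))" using A v by blast
  also have "\<dots> \<le> sum_list (map (\<lambda>v. (v v* D) \<bullet> (A *v (v v* D))) vs)"
    by (rule member_le_sum_list) (use v Aq in auto)
  finally show ?thesis unfolding vs trace_sumlist .
qed




lemma transpose_add': "transpose (A + B) = transpose A + transpose (B::real^'n^'m)"
  by (simp add: transpose_def vec_eq_iff)
lemma transpose_diff': "transpose (A - B) = transpose A - transpose (B::real^'n^'m)"
  by (simp add: transpose_def vec_eq_iff)
lemma trace_scale: "trace (c *\<^sub>R (M::real^'n^'n)) = c * trace M"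
  by (simp add: trace_def sum_distrib_left)
lemma vmul_scale: "x v* (c *\<^sub>R (M::real^'n^'m)) = c *\<^sub>R (x v* M)"
  by (simp add: vector_matrix_mult_def vec_eq_iff sum_distrib_left mult_ac)
lemma scale_vmul: "(c *\<^sub>R x) v* (M::real^'n^'m) = c *\<^sub>R (x v* M)"
  by (simp add: vector_matrix_mult_def vec_eq_iff sum_distrib_left mult_ac)
lemma mat_scale: "(M::real^'n^'m) ** (c *\<^sub>R N) = c *\<^sub>R (M ** (N::real^'p^'n))"
  by (simp add: matrix_matrix_mult_def vec_eq_iff sum_distrib_left mult_ac)
lemma scale_mat: "(c *\<^sub>R M) ** (N::real^'p^'n) = c *\<^sub>R ((M::real^'n^'m) ** N)"
  by (simp add: matrix_matrix_mult_def vec_eq_iff sum_distrib_left mult_ac)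

lemma matrix_sub_ldistrib: "(A::real^'n^'m) ** (B - C) = A ** B - A ** (C::real^'p^'n)"
  by (vector matrix_matrix_mult_def sum_subtractf[symmetric] field_simps)

lemma sym_vmul: "transpose (M::real^'n^'n) = M \<Longrightarrow> x v* M = M *v x"
  by (metis vector_transpose_matrix)

lemma vec1_ne0: "(vec 1 :: real^'n) \<noteq> 0"
  by (simp add: vec_eq_iff)




theorem theorem1:
  fixes mu :: "real^'k" and S :: "real^'k^'k"
    and alpha beta phi :: "real^'n"
  assumes "CARD('k) \<ge> 2" and "CARD('n) \<ge> 2"
    and "sym_pos_def_mat S"
    and "\<forall>i. alpha $ i > 0" and "inj (\<lambda>i. alpha $ i)"
    and "\<forall>i. beta $ i > 0" and "(\<Sum>i\<in>UNIV. beta $ i) = 1"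
    and "\<forall>i. phi $ i > 0"
  shows "sym_pos_def_mat (A_phi alpha beta phi)
    \<and> feasible (W_star mu S alpha beta phi)
    \<and> (\<forall>W. feasible W \<longrightarrow> W \<noteq> W_star mu S alpha beta phi \<longrightarrow>
          EU mu S (A_mat alpha beta phi) beta W
            < EU mu S (A_mat alpha beta phi) beta (W_star mu S alpha beta phi))"
proof -
  note Spd = assms(3)
  define A where "A = A_mat alpha beta phi"
  define Ap where "Ap = A_phi alpha beta phi"
  have Appd: "sym_pos_def_mat Ap" unfolding Ap_def using Aphi_pd assms(4,6,8) by blast
  define T where "T = matrix_inv S"
  define P where "P = matrix_inv Ap"
  define o1 where "o1 = (vec 1 :: real^'k)"
  define on where "on = (vec 1 :: real^'n)"
  define c where "c = o1 \<bullet> (T *v o1)"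
  define Q where "Q = Q_mat S"
  define u where "u = (1 / c) *\<^sub>R (T *v o1)"
  define q where "q = Q *v mu"
  define r where "r = beta v* P"
  define Ws where "Ws = W_star mu S alpha beta phi"
  have Ws: "Ws = outer u on + outer q r"
    unfolding Ws_def W_star_def u_def on_def q_def r_def Q_def P_def Ap_def c_def T_def o1_def ..
  have Q: "Q = T - (1/c) *\<^sub>R (T ** outer o1 o1 ** T)"
    unfolding Q_def Q_mat_def T_def c_def o1_def ..
  have invS: "invertible S" using pd_invertible Spd by blast
  have ST: "S ** T = mat 1" "T ** S = mat 1" unfolding T_def using inv_props[OF invS] by auto
  have symS: "transpose S = S" using Spd sym_pos_def_mat_def by blast
  have Tpd: "sym_pos_def_mat T" unfolding T_def using inv_pd Spd by blast
  have symT: "transpose T = T" using Tpd sym_pos_def_mat_def by blast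
  have cpos: "c > 0" unfolding c_def o1_def using Tpd vec1_ne0 sym_pos_def_mat_def by blast
  have invAp: "invertible Ap" using pd_invertible Appd by blast
  have AP: "Ap ** P = mat 1" unfolding P_def using inv_props[OF invAp] by auto
  have symAp: "transpose Ap = Ap" using Appd sym_pos_def_mat_def by blast
  have symP: "transpose P = P" unfolding P_def using inv_sym[OF invAp symAp] .
  have oT: "o1 v* T = T *v o1" using sym_vmul[OF symT] .
  have oQ: "o1 v* Q = 0"
  proof -
    have "o1 v* (T ** outer o1 o1 ** T) = c *\<^sub>R (T *v o1)"
      by (simp add: vector_matrix_mul_assoc[symmetric] oT vmul_outer scale_vmul c_def inner_commute)
    then show ?thesis unfolding Q using cpos
      by (simp add: vector_matrix_mult_diff_rdistrib vmul_scale oT)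
  qed
  have feas: "feasible Ws"
  proof -
    have "o1 \<bullet> u = 1" unfolding u_def using cpos by (simp add: c_def)
    moreover have "o1 \<bullet> q = 0" unfolding q_def by (simp add: dot_lmul_matrix[symmetric] oQ)
    ultimately have "o1 v* Ws = on" unfolding Ws by (simp add: vector_matrix_mult_add_rdistrib vmul_outer)
    then show ?thesis unfolding feasible_def o1_def on_def by simp
  qed
  have ApW: "Ap ** transpose Ws ** S =
      outer (Ap *v on) ((1/c) *\<^sub>R o1) + outer beta (mu - ((1/c) * (o1 \<bullet> (T *v mu))) *\<^sub>R o1)"
  proof -
    have Apr: "Ap *v r = beta" unfolding r_def
      by (simp add: sym_vmul[OF symP] matrix_vector_mul_assoc AP)
    have uS: "u v* S = (1/c) *\<^sub>R o1" unfolding u_def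
      by (simp add: scale_vmul sym_vmul[OF symS] matrix_vector_mult_scaleR matrix_vector_mul_assoc ST)
    have SQ: "S ** Q = mat 1 - (1/c) *\<^sub>R (outer o1 o1 ** T)"
      unfolding Q by (simp add: matrix_sub_ldistrib mat_scale ST matrix_mul_assoc)
    have qS: "q v* S = mu - ((1/c) * (o1 \<bullet> (T *v mu))) *\<^sub>R o1"
    proof -
      have "q v* S = (S ** Q) *v mu" unfolding q_def by (simp add: sym_vmul[OF symS] matrix_vector_mul_assoc)
      also have "\<dots> = mu - (1/c) *\<^sub>R (outer o1 o1 *v (T *v mu))"
        unfolding SQ by (simp add: matrix_vector_mult_diff_rdistrib scale_mulv matrix_vector_mul_assoc)
      also have "\<dots> = mu - ((1/c) * (o1 \<bullet> (T *v mu))) *\<^sub>R o1" by (simp add: outer_mulv)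
      finally show ?thesis .
    qed
    show ?thesis unfolding Ws
      by (simp add: transpose_add' outer_transpose matrix_add_ldistrib matrix_add_rdistrib' mat_outer
          outer_mat Apr uS qS)
  qed
  have opt: "EU mu S A beta W < EU mu S A beta Ws" if fW: "feasible W" and ne: "W \<noteq> Ws" for W
  proof -
    define D where "D = W - Ws"
    have WD: "W = Ws + D" unfolding D_def by simp
    have Dne: "D \<noteq> 0" using ne unfolding D_def by simp
    have oD: "o1 v* D = 0"
      using fW feas unfolding feasible_def D_def o1_def by (simp add: vector_matrix_mult_diff_rdistrib)
    have expand: "A ** transpose W ** S ** W = A ** transpose Ws ** S ** Ws + A ** transpose Ws ** S ** D
        + A ** transpose D ** S ** Ws + A ** transpose D ** S ** D"
      unfolding WD by (simp add: transpose_add' matrix_add_ldistrib matrix_add_rdistrib')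
    have tr1: "trace (A ** transpose D ** S ** Ws) = trace (transpose A ** (transpose Ws ** S ** D))"
    proof -
      have "trace (A ** transpose D ** S ** Ws) = trace (transpose (A ** transpose D ** S ** Ws))"
        by (simp add: trace_transpose)
      also have "transpose (A ** transpose D ** S ** Ws) = (transpose Ws ** S ** D) ** transpose A"
        by (simp add: matrix_transpose_mul symS matrix_mul_assoc)
      also have "trace \<dots> = trace (transpose A ** (transpose Ws ** S ** D))" by (rule trace_mul_sym)
      finally show ?thesis .
    qed
    have AAp: "A + transpose A = 2 *\<^sub>R Ap" unfolding Ap_def A_phi_def A_def by simp
    have cross: "trace (A ** transpose Ws ** S ** D) + trace (A ** transpose D ** S ** Ws)
        = 2 * (mu \<bullet> (D *v beta))"
    proof -
      have "trace (A ** transpose Ws ** S ** D) + trace (A ** transpose D ** S ** Ws)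
          = trace ((A + transpose A) ** (transpose Ws ** S ** D))"
        unfolding tr1 by (simp add: matrix_add_rdistrib' trace_add matrix_mul_assoc)
      also have "\<dots> = 2 * trace (Ap ** transpose Ws ** S ** D)"
        unfolding AAp by (simp add: scale_mat trace_scale matrix_mul_assoc)
      also have "trace (Ap ** transpose Ws ** S ** D) = mu \<bullet> (D *v beta)"
      proof -
        have z: "o1 \<bullet> (D *v x) = 0" for x by (simp add: dot_lmul_matrix[symmetric] oD)
        show ?thesis unfolding ApW
          by (simp add: matrix_add_rdistrib' trace_add trace_outer inner_diff_left z)
      qed
      finally show ?thesis .
    qed
    have lin: "beta \<bullet> (transpose D *v mu) = mu \<bullet> (D *v beta)"
      by (simp add: inner_commute[of beta] dot_lmul_matrix)
    have pos: "trace (A ** transpose D ** S ** D) > 0"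
    proof (rule trace_pos[OF Spd _ Dne])
      show "\<forall>x. x \<noteq> 0 \<longrightarrow> 0 < x \<bullet> (A *v x)"
        using Appd unfolding sym_pos_def_mat_def Ap_def A_def by (simp add: Aphi_quad)
    qed
    have t: "trace (A ** transpose W ** S ** W) = trace (A ** transpose Ws ** S ** Ws)
        + trace (A ** transpose Ws ** S ** D) + trace (A ** transpose D ** S ** Ws)
        + trace (A ** transpose D ** S ** D)"
      by (simp only: expand trace_add)
    have l: "beta \<bullet> (transpose W *v mu) = beta \<bullet> (transpose Ws *v mu) + beta \<bullet> (transpose D *v mu)"
      by (simp only: WD transpose_add' matrix_vector_mult_add_rdistrib inner_add_right)
    have "EU mu S A beta W = EU mu S A beta Ws - (1/2) * trace (A ** transpose D ** S ** D)"
      unfolding EU_def using t l cross lin by linarith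
    then show ?thesis using pos by simp
  qed
  show ?thesis using Appd feas opt unfolding Ap_def A_def Ws_def by blast
qed


end
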